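(* Let $0<\phi<\pi/6$, $\nu>0$. For $F,G\in\mathcal A_\phi$ and every integer $j\ge0$, $$|(p^jF)*G(p,t)|\le\frac{|p|^je^{\nu|p|}}{M_0(1+|p|^2)}\|F\|_\nu\|G\|_\nu\qquad\text{for all }(p,t)\in\overline{\mathcal S_\phi}\times[0,T].$$
   Context: $T>0$; $\mathcal S_\phi=\{p:\arg p\in(-\phi,\phi),0<|p|<\infty\}$, $\mathcal K=\overline{\mathcal S_\phi}\times[0,T]$; $\|G\|_\nu=M_0\sup_{(p,t)\in\mathcal K}(1+|p|^2)e^{-\nu|p|}|G(p,t)|$ with $M_0=\sup_{s\ge0}\frac{2(1+s^2)(\ln(1+s^2)+s\arctan s)}{s(s^2+4)}$. $\mathcal A_\phi$ is the space of functions $F(p,t)$ analytic in $p\in\mathcal S_\phi$, continuous on $\overline{\mathcal S_\phi}$ for each $t\in[0,T]$, with $\|F\|_\nu<\infty$. Convolution: $(F*G)(p,t)=\int_0^pF(s,t)G(p-s,t)\,ds$ along the segment $[0,p]$; $(p^jF)$ denotes the function $(p,t)\mapsto p^jF(p,t)$. *)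

theory Defs
  imports "HOL-Complex_Analysis.Complex_Analysis"
begin

definition sector :: "real \<Rightarrow> complex set" where
  "sector \<phi> = {p. p \<noteq> 0 \<and> -\<phi> < Arg p \<and> Arg p < \<phi>}"

definition M0 :: real where
  "M0 = (SUP s\<in>{0::real..}. 2 * (1 + s^2) * (ln (1 + s^2) + s * arctan s) / (s * (s^2 + 4)))"

definition wnorm :: "real \<Rightarrow> real \<Rightarrow> real \<Rightarrow> (complex \<Rightarrow> real \<Rightarrow> complex) \<Rightarrow> real" where
  "wnorm \<phi> T \<nu> G = M0 * (SUP pt\<in>closure (sector \<phi>) \<times> {0..T}.
      (1 + (cmod (fst pt))^2) * exp (-\<nu> * cmod (fst pt)) * cmod (G (fst pt) (snd pt)))"

definition Aspace :: "real \<Rightarrow> real \<Rightarrow> real \<Rightarrow> (complex \<Rightarrow> real \<Rightarrow> complex) set" where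
  "Aspace \<phi> T \<nu> = {F. (\<forall>t\<in>{0..T}. (\<lambda>p. F p t) holomorphic_on sector \<phi> \<and>
                        continuous_on (closure (sector \<phi>)) (\<lambda>p. F p t)) \<and>
      bdd_above ((\<lambda>pt. (1 + (cmod (fst pt))^2) * exp (-\<nu> * cmod (fst pt)) * cmod (F (fst pt) (snd pt)))
                   ` (closure (sector \<phi>) \<times> {0..T}))}"

definition conv :: "(complex \<Rightarrow> real \<Rightarrow> complex) \<Rightarrow> (complex \<Rightarrow> real \<Rightarrow> complex) \<Rightarrow> complex \<Rightarrow> real \<Rightarrow> complex" where
  "conv F G p t = contour_integral (linepath 0 p) (\<lambda>s. F s t * G (p - s) t)"

end

theory Submission imports Defs begin

lemma d_at1: fixes r x :: real shows "((\<lambda>x. arctan (x*r)) has_real_derivative r/(1+(x*r)^2)) (at x)"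
  by (rule derivative_eq_intros refl)+ (simp add: field_simps)
lemma d_at2: fixes r x :: real shows "((\<lambda>x. arctan ((1-x)*r)) has_real_derivative -r/(1+((1-x)*r)^2)) (at x)"
  by (rule derivative_eq_intros refl)+ (simp add: field_simps)
lemma d_ln1: fixes r x :: real shows "((\<lambda>x. ln (1+(x*r)^2)) has_real_derivative 2*(x*r)*r/(1+(x*r)^2)) (at x)"
  apply (rule derivative_eq_intros refl | (rule add_pos_nonneg; simp; fail))+
  apply (simp add: field_simps)
  done
lemma d_ln2: fixes r x :: real shows "((\<lambda>x. ln (1+((1-x)*r)^2)) has_real_derivative -2*((1-x)*r)*r/(1+((1-x)*r)^2)) (at x)"
  apply (rule derivative_eq_intros refl | (rule add_pos_nonneg; simp; fail))+
  apply (simp add: field_simps)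
  done

lemma pf_identity: fixes a b r u v :: real assumes "1+u^2 \<noteq> 0" "1+v^2 \<noteq> 0" "u+v = r"
  and key: "a*(2+u^2+v^2) + b * r * (1 + u * v) = 1"
  shows "a*(r/(1+u^2) + r/(1+v^2)) + b*(u * r/(1+u^2) + v * r/(1+v^2)) = r/((1+u^2)*(1+v^2))"
proof -
  have "a*(r/(1+u^2) + r/(1+v^2)) + b*(u * r/(1+u^2) + v * r/(1+v^2)) = 
     r * (a*(2+u^2+v^2) + b * (u+v) * (1 + u * v))/((1+u^2)*(1+v^2))"
    using assms(1,2) by (simp add: divide_simps) (simp add: algebra_simps power2_eq_square)
  also have "\<dots> = r/((1+u^2)*(1+v^2))" using key unfolding assms(3) by simp
  finally show ?thesis .
qed

definition Phi :: "real \<Rightarrow> real \<Rightarrow> real" where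
  "Phi r x = 1/(r^2+4)*(arctan (x*r) - arctan ((1-x)*r)) + 2/(r * (r^2+4))/2*(ln (1+(x*r)^2) - ln (1+((1-x)*r)^2))"

lemma Ideriv:
  fixes r :: real assumes r: "r > 0"
  shows "(Phi r has_real_derivative (r/((1+(x*r)^2)*(1+((1-x)*r)^2)))) (at x)"
proof -
  define a where "a = 1/(r^2+4)"
  define b where "b = 2/(r * (r^2+4))"
  define u where "u = x*r"
  define v where "v = (1-x)*r"
  have uv: "u + v = r" unfolding u_def v_def by (simp add: algebra_simps)
  have p1: "1+u^2 > 0" "1+v^2 > 0" by (auto intro: add_pos_nonneg)
  have r4: "r^2+4 > 0" by (metis add_pos_nonneg zero_le_power2 zero_less_numeral add.commute)
  have key: "a*(2+u^2+v^2) + b * r * (1 + u * v) = 1"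
  proof -
    have hb: "b * r = 2*a" unfolding a_def b_def using r by simp
    have "a*(2+u^2+v^2) + b * r * (1 + u * v) = a*(4 + (u+v)^2)"
      unfolding hb by (simp add: algebra_simps power2_eq_square)
    also have "\<dots> = 1" using uv r4 unfolding a_def by (simp add: add.commute)
    finally show ?thesis .
  qed
  have e0: "a*(r/(1+u^2) + r/(1+v^2)) + b*(u * r/(1+u^2) + v * r/(1+v^2)) = r/((1+u^2)*(1+v^2))"
    by (rule pf_identity) (use p1 uv key in auto)
  have D: "(Phi r has_real_derivative
      (a*(r/(1+u^2) - (-r/(1+v^2))) + b/2*(2 * u * r/(1+u^2) - (-2 * v * r/(1+v^2))))) (at x)"
    unfolding Phi_def a_def[symmetric] b_def[symmetric] u_def v_def
    by (intro DERIV_add DERIV_cmult DERIV_diff d_at1 d_at2 d_ln1 d_ln2)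
  have "a*(r/(1+u^2) - (-r/(1+v^2))) + b/2*(2 * u * r/(1+u^2) - (-2 * v * r/(1+v^2)))
     = a*(r/(1+u^2) + r/(1+v^2)) + b*(u * r/(1+u^2) + v * r/(1+v^2))"
    by (simp add: algebra_simps add_divide_distrib)
  with D e0 show ?thesis unfolding u_def v_def by simp
qed

definition f1 :: "real \<Rightarrow> real" where
  "f1 s = 2 * (1 + s^2) * (ln (1 + s^2) + s * arctan s) / (s * (s^2 + 4))"

lemma Iint:
  fixes r :: real assumes r: "r > 0"
  shows "((\<lambda>x. r/((1+(x*r)^2)*(1+((1-x)*r)^2))) has_integral f1 r / (1 + r^2)) {0..1}"
proof -
  have "((\<lambda>x. r/((1+(x*r)^2)*(1+((1-x)*r)^2))) has_integral (Phi r 1 - Phi r 0)) {0..1}"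
    by (rule fundamental_theorem_of_calculus)
       (auto simp: has_real_derivative_iff_has_vector_derivative[symmetric]
            intro!: has_field_derivative_at_within[OF Ideriv[OF r]])
  moreover have "Phi r 1 - Phi r 0 = f1 r / (1 + r^2)"
  proof -
    define L where "L = ln (1 + r^2)"
    define A where "A = arctan r"
    have n1: "1 + r^2 \<noteq> 0" by (metis add_pos_nonneg zero_le_power2 zero_less_one less_irrefl)
    have n2: "r^2 + 4 \<noteq> 0" by (metis add_pos_nonneg zero_le_power2 zero_less_numeral add.commute less_irrefl)
    have e1: "Phi r 1 = 1/(r^2+4) * A + 1/(r * (r^2+4)) * L"
      unfolding Phi_def A_def L_def by simp
    have e2: "Phi r 0 = -(1/(r^2+4) * A) - 1/(r * (r^2+4)) * L"
      unfolding Phi_def A_def L_def by simp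
    have "Phi r 1 - Phi r 0 = 2/(r^2+4) * A + 2/(r * (r^2+4)) * L"
      unfolding e1 e2 by simp
    also have "\<dots> = 2 * (L + r * A) / (r * (r^2+4))"
    proof -
      have rne: "r \<noteq> 0" using r by simp
      have "2/(r^2+4) * A = (2 * r * A) / (r * (r^2+4))" using rne by simp
      moreover have "2/(r * (r^2+4)) * L = (2 * L) / (r * (r^2+4))" by simp
      ultimately show ?thesis by (simp add: add_divide_distrib[symmetric] algebra_simps)
    qed
    also have "\<dots> = f1 r / (1 + r^2)"
    proof -
      have "f1 r = (1 + r^2) * (2 * (L + r * A) / (r * (r^2+4)))"
        unfolding f1_def A_def L_def by (simp add: mult.assoc) (simp add: algebra_simps)
      thus ?thesis using n1 by simp
    qed
    finally show ?thesis .
  qed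
  ultimately show ?thesis by simp
qed

lemma f1_le: fixes s :: real assumes "s \<ge> 0" shows "f1 s \<le> 8"
proof (cases "s = 0")
  case True then show ?thesis by (simp add: f1_def)
next
  case False
  hence s: "s > 0" using assms by simp
  have l: "ln (1 + s^2) \<le> 2 * s"
  proof -
    have "1 + s^2 \<le> (1+s)^2" using s by (simp add: power2_eq_square algebra_simps)
    also have "\<dots> \<le> exp s ^ 2" using s exp_ge_add_one_self[of s] by (intro power_mono) auto
    also have "\<dots> = exp (2 * s)" by (simp add: exp_double[symmetric] power2_eq_square exp_add[symmetric])
    finally have "1 + s^2 \<le> exp (2 * s)" .
    hence "ln (1 + s^2) \<le> ln (exp (2 * s))" by (intro ln_mono) (auto intro: add_pos_nonneg)
    thus ?thesis by simp
  qed
  have at: "arctan s \<le> 2" using arctan_ubound[of s] pi_less_4 by linarith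
  have "s * arctan s \<le> s * 2" using at s by (intro mult_left_mono) auto
  hence "ln (1 + s^2) + s * arctan s \<le> 4 * s" using l by linarith
  hence "2 * (1 + s^2) * (ln (1 + s^2) + s * arctan s) \<le> 2 * (1 + s^2) * (4 * s)"
    by (intro mult_left_mono) (auto intro: add_nonneg_nonneg)
  also have "\<dots> = 8 * (s * (1 + s^2))" by (simp add: algebra_simps)
  also have "\<dots> \<le> 8 * (s * (s^2 + 4))" using s by simp
  finally have N: "2 * (1 + s^2) * (ln (1 + s^2) + s * arctan s) \<le> 8 * (s * (s^2 + 4))" .
  have "s * (s^2 + 4) > 0" using s by (intro mult_pos_pos add_nonneg_pos) auto
  with N show ?thesis unfolding f1_def by (simp add: divide_le_eq)
qed

lemma M0_ge: fixes s :: real assumes "s \<ge> 0" shows "f1 s \<le> M0"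
proof -
  have "bdd_above (f1 ` {0..})" by (rule bdd_aboveI[of _ 8]) (auto intro: f1_le)
  moreover have "M0 = (SUP s\<in>{0::real..}. f1 s)" unfolding M0_def f1_def by simp
  ultimately show ?thesis using assms by (metis cSUP_upper atLeast_iff)
qed


lemma zero_in_cl: assumes "\<phi> > 0" shows "0 \<in> closure (sector \<phi>)"
  unfolding closure_approachable
proof (intro allI impI)
  fix e :: real assume e: "e > 0"
  define d where "d = e/2"
  have d: "d > 0" "d < e" using e unfolding d_def by auto
  have "complex_of_real d \<in> sector \<phi>" using d assms unfolding sector_def by auto
  moreover have "dist (complex_of_real d) 0 < e" using d by simp
  ultimately show "\<exists>y\<in>sector \<phi>. dist y 0 < e" by blast
qed

lemma scale_in_cl: assumes "\<phi> > 0" "p \<in> closure (sector \<phi>)" "c \<ge> 0"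
  shows "complex_of_real c * p \<in> closure (sector \<phi>)"
proof (cases "c = 0")
  case True then show ?thesis using zero_in_cl[OF assms(1)] by simp
next
  case False
  hence c: "c > 0" using assms(3) by simp
  have sub: "scaleR c ` sector \<phi> \<subseteq> sector \<phi>"
    using c unfolding sector_def by (auto simp: scaleR_conv_of_real)
  have "c *\<^sub>R p \<in> scaleR c ` closure (sector \<phi>)" using assms(2) by blast
  also have "\<dots> = closure (scaleR c ` sector \<phi>)" by (rule closure_scaleR)
  also have "\<dots> \<subseteq> closure (sector \<phi>)" using sub by (rule closure_mono)
  finally show ?thesis by (simp add: scaleR_conv_of_real)
qed

lemma Abound:
  assumes "F \<in> Aspace \<phi> T \<nu>" "s \<in> closure (sector \<phi>)" "t \<in> {0..T}"
  shows "(1 + (cmod s)^2) * exp (-\<nu> * cmod s) * cmod (F s t)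
     \<le> Sup ((\<lambda>pt. (1 + (cmod (fst pt))^2) * exp (-\<nu> * cmod (fst pt)) * cmod (F (fst pt) (snd pt)))
                   ` (closure (sector \<phi>) \<times> {0..T}))"
proof -
  define f where "f = (\<lambda>pt. (1 + (cmod (fst pt))^2) * exp (-\<nu> * cmod (fst pt)) * cmod (F (fst pt) (snd pt)))"
  have "bdd_above (f ` (closure (sector \<phi>) \<times> {0..T}))" using assms(1) unfolding Aspace_def f_def
    by (simp only: mem_Collect_eq)
  moreover have "(s,t) \<in> closure (sector \<phi>) \<times> {0..T}" using assms by auto
  ultimately have "f (s,t) \<le> Sup (f ` (closure (sector \<phi>) \<times> {0..T}))" by (intro cSUP_upper)
  thus ?thesis unfolding f_def by simp
qed

lemma Abound2:
  assumes "F \<in> Aspace \<phi> T \<nu>" "s \<in> closure (sector \<phi>)" "t \<in> {0..T}"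
  shows "cmod (F s t) \<le> Sup ((\<lambda>pt. (1 + (cmod (fst pt))^2) * exp (-\<nu> * cmod (fst pt)) * cmod (F (fst pt) (snd pt)))
                   ` (closure (sector \<phi>) \<times> {0..T})) * exp (\<nu> * cmod s) / (1 + (cmod s)^2)"
proof -
  have pos: "1 + (cmod s)^2 > 0" by (intro add_pos_nonneg) auto
  have "(1 + (cmod s)^2) * exp (-\<nu> * cmod s) * cmod (F s t) * exp (\<nu> * cmod s) / (1 + (cmod s)^2)
      = cmod (F s t)"
  proof -
    have ee: "exp (-\<nu> * cmod s) * exp (\<nu> * cmod s) = 1" by (simp add: exp_add[symmetric])
    have "(1 + (cmod s)^2) * exp (-\<nu> * cmod s) * cmod (F s t) * exp (\<nu> * cmod s) / (1 + (cmod s)^2)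
       = ((1 + (cmod s)^2) * cmod (F s t) * (exp (-\<nu> * cmod s) * exp (\<nu> * cmod s))) / (1 + (cmod s)^2)"
      by (simp add: mult_ac)
    also have "\<dots> = cmod (F s t)" unfolding ee using pos by simp
    finally show ?thesis .
  qed
  moreover have "(1 + (cmod s)^2) * exp (-\<nu> * cmod s) * cmod (F s t) * exp (\<nu> * cmod s) / (1 + (cmod s)^2)
     \<le> Sup ((\<lambda>pt. (1 + (cmod (fst pt))^2) * exp (-\<nu> * cmod (fst pt)) * cmod (F (fst pt) (snd pt)))
                   ` (closure (sector \<phi>) \<times> {0..T})) * exp (\<nu> * cmod s) / (1 + (cmod s)^2)"
    using Abound[OF assms] pos by (intro divide_right_mono mult_right_mono) auto
  ultimately show ?thesis by simp
qed


lemma pw_aux: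
  fixes x r SF SG E1 E2 D1 D2 nF nG :: real
  assumes "0 \<le> x" "x \<le> 1" "r \<ge> 0" "D1 > 0" "D2 > 0" "E1 \<ge> 0" "E2 \<ge> 0" "SF \<ge> 0" "SG \<ge> 0"
    and "nF \<le> SF * E1 / D1" "nG \<le> SG * E2 / D2" "nF \<ge> 0" "nG \<ge> 0"
  shows "(x*r)^j * nF * nG * r \<le> r^j * (E1 * E2) * SF * SG * (r/(D1*D2))"
proof -
  have "(x*r)^j \<le> r^j" using assms by (intro power_mono) (auto simp: mult_left_le_one_le)
  hence "(x*r)^j * nF * nG * r \<le> r^j * (SF * E1 / D1) * (SG * E2 / D2) * r"
    using assms by (intro mult_mono mult_nonneg_nonneg divide_nonneg_nonneg) auto
  also have "\<dots> = r^j * (E1 * E2) * SF * SG * (r/(D1*D2))" using assms by (simp add: field_simps)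
  finally show ?thesis .
qed

theorem lemma11:
  fixes \<phi> \<nu> T :: real and F G :: "complex \<Rightarrow> real \<Rightarrow> complex" and j :: nat
    and p :: complex and t :: real
  assumes "T > 0" and "0 < \<phi>" and "\<phi> < pi / 6" and "\<nu> > 0"
    and "F \<in> Aspace \<phi> T \<nu>" and "G \<in> Aspace \<phi> T \<nu>"
    and "p \<in> closure (sector \<phi>)" and "t \<in> {0..T}"
  shows "cmod (conv (\<lambda>s t. s ^ j * F s t) G p t)
         \<le> cmod p ^ j * exp (\<nu> * cmod p) / (M0 * (1 + (cmod p)^2)) * wnorm \<phi> T \<nu> F * wnorm \<phi> T \<nu> G"
proof -
  define SF where "SF = Sup ((\<lambda>pt. (1 + (cmod (fst pt))^2) * exp (-\<nu> * cmod (fst pt)) * cmod (F (fst pt) (snd pt)))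
                   ` (closure (sector \<phi>) \<times> {0..T}))"
  define SG where "SG = Sup ((\<lambda>pt. (1 + (cmod (fst pt))^2) * exp (-\<nu> * cmod (fst pt)) * cmod (G (fst pt) (snd pt)))
                   ` (closure (sector \<phi>) \<times> {0..T}))"
  have wF: "wnorm \<phi> T \<nu> F = M0 * SF" unfolding wnorm_def SF_def ..
  have wG: "wnorm \<phi> T \<nu> G = M0 * SG" unfolding wnorm_def SG_def ..
  have bF: "cmod (F s t) \<le> SF * exp (\<nu> * cmod s) / (1 + (cmod s)^2)" if "s \<in> closure (sector \<phi>)" for s
    using Abound2[OF assms(5) that assms(8)] unfolding SF_def .
  have bG: "cmod (G s t) \<le> SG * exp (\<nu> * cmod s) / (1 + (cmod s)^2)" if "s \<in> closure (sector \<phi>)" for s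
    using Abound2[OF assms(6) that assms(8)] unfolding SG_def .
  have SF0: "SF \<ge> 0"
  proof -
    have "0 \<le> (1 + (cmod p)^2) * exp (-\<nu> * cmod p) * cmod (F p t)" by (intro mult_nonneg_nonneg) auto
    also have "\<dots> \<le> SF" using Abound[OF assms(5,7,8)] unfolding SF_def .
    finally show ?thesis .
  qed
  have SG0: "SG \<ge> 0"
  proof -
    have "0 \<le> (1 + (cmod p)^2) * exp (-\<nu> * cmod p) * cmod (G p t)" by (intro mult_nonneg_nonneg) auto
    also have "\<dots> \<le> SG" using Abound[OF assms(6,7,8)] unfolding SG_def .
    finally show ?thesis .
  qed
  have M00: "M0 \<ge> 0" using M0_ge[of 0] by (simp add: f1_def)
  define r where "r = cmod p"
  have r0: "r \<ge> 0" unfolding r_def by simp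
  have D0: "1 + r^2 > 0" by (intro add_pos_nonneg) auto
  define C where "C = r^j * exp (\<nu> * r) * SF * SG"
  have C0: "C \<ge> 0" unfolding C_def using r0 SF0 SG0 by simp
  have RHS: "cmod p ^ j * exp (\<nu> * cmod p) / (M0 * (1 + (cmod p)^2)) * wnorm \<phi> T \<nu> F * wnorm \<phi> T \<nu> G
      = C * M0 / (1 + r^2)"
  proof (cases "M0 = 0")
    case True then show ?thesis unfolding wF wG by simp
  next
    case False
    have aux: "X / (M * D) * (M * a) * (M * b) = X * a * b * M / D" if "M \<noteq> 0" "D \<noteq> 0"
      for X M D a b :: real using that by (simp add: field_simps)
    show ?thesis unfolding wF wG C_def r_def
      by (subst aux) (use False D0[unfolded r_def] in auto)
  qed
  have RHS0: "C * M0 / (1 + r^2) \<ge> 0" using C0 M00 D0 by simp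
  define g where "g = (\<lambda>s. s^j * F s t * G (p - s) t)"
  have conv_eq: "conv (\<lambda>s t. s ^ j * F s t) G p t = contour_integral (linepath 0 p) g"
    unfolding conv_def g_def by simp
  have main: "cmod (contour_integral (linepath 0 p) g) \<le> C * M0 / (1 + r^2)"
  proof (cases "g contour_integrable_on linepath 0 p")
    case False
    then show ?thesis using RHS0 by (simp add: not_integrable_contour_integral)
  next
    case True
    hence hi: "((\<lambda>x. g (linepath 0 p x) * (p - 0)) has_integral contour_integral (linepath 0 p) g) {0..1}"
      using has_contour_integral_integral has_contour_integral_linepath by blast
    show ?thesis
    proof (cases "p = 0")
      case True
      have "((\<lambda>x. g (linepath 0 p x) * (p - 0)) has_integral 0) {0..1}" using True by simp
      hence "contour_integral (linepath 0 p) g = 0" using hi has_integral_unique by blast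
      then show ?thesis using RHS0 by simp
    next
      case False
      hence r: "r > 0" unfolding r_def by simp
      have kint: "((\<lambda>x. C * (r/((1+(x*r)^2)*(1+((1-x)*r)^2)))) has_integral C * (f1 r / (1 + r^2))) {0..1}"
        by (rule has_integral_mult_right[OF Iint[OF r]])
      have pw: "norm (g (linepath 0 p x) * (p - 0)) \<le> C * (r/((1+(x*r)^2)*(1+((1-x)*r)^2)))"
        if x: "x \<in> {0..1}" for x
      proof -
        define s where "s = complex_of_real x * p"
        have lp: "linepath 0 p x = s" unfolding s_def linepath_def by (simp add: scaleR_conv_of_real)
        have ps: "p - s = complex_of_real (1 - x) * p" unfolding s_def by (simp add: algebra_simps)
        have x0: "0 \<le> x" "x \<le> 1" using x by auto
        have ns: "cmod s = x * r" unfolding s_def r_def using x0 by (simp add: norm_mult)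
        have nps: "cmod (p - s) = (1 - x) * r" unfolding ps r_def norm_mult norm_of_real using x0 by simp
        have sin: "s \<in> closure (sector \<phi>)" unfolding s_def using assms(2,7) x0 by (intro scale_in_cl) auto
        have psin: "p - s \<in> closure (sector \<phi>)" unfolding ps using assms(2,7) x0 by (intro scale_in_cl) auto
        have "norm (g (linepath 0 p x) * (p - 0)) = (x*r)^j * cmod (F s t) * cmod (G (p - s) t) * r"
          unfolding lp g_def using ns r_def by (simp add: norm_mult norm_power)
        also have "\<dots> \<le> r^j * (exp (\<nu> * (x*r)) * exp (\<nu> * ((1-x)*r))) * SF * SG * (r/((1+(x*r)^2)*(1+((1-x)*r)^2)))"
          using bF[OF sin] bG[OF psin] unfolding ns nps
          by (intro pw_aux x0 r0 SF0 SG0) (auto intro: add_pos_nonneg)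
        also have "exp (\<nu> * (x*r)) * exp (\<nu> * ((1-x)*r)) = exp (\<nu> * r)"
          by (simp add: exp_add[symmetric] algebra_simps)
        finally show ?thesis unfolding C_def by (simp add: mult_ac)
      qed
      have "norm (contour_integral (linepath 0 p) g) \<le> C * (f1 r / (1 + r^2))"
        using integral_norm_bound_integral[OF has_integral_integrable[OF hi] has_integral_integrable[OF kint] pw]
        using integral_unique[OF hi] integral_unique[OF kint] by simp
      also have "\<dots> \<le> C * (M0 / (1 + r^2))"
        using M0_ge[OF r0] C0 D0 by (intro mult_left_mono divide_right_mono) auto
      finally show ?thesis by simp
    qed
  qed
  show ?thesis unfolding conv_eq RHS using main .
qed

end
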